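(* Let $f\in\mathbf Q[X]$ be a separable polynomial of degree $2n$. (i) If $f$ is reciprocal, i.e. $f(X)=X^{2n}f(X^{-1})$, then the discriminant of $f$ is a square in $\mathbf Q$ if and only if $(-1)^nf(1)f(-1)$ is a square in $\mathbf Q$. (ii) If $f$ is skew-reciprocal, i.e. $f(X)=(-1)^{2n(2n-1)/2}X^{2n}f(-X^{-1})$, then the discriminant of $f$ is a square in $\mathbf Q$ if and only if $f(\mathrm i)f(-\mathrm i)$ (which is rational) is a square in $\mathbf Q$, where $\mathrm i\in\mathbf C$ is the imaginary unit. *)

theory Defs
  imports Complex_Main "HOL-Computational_Algebra.Polynomial" "Subresultants.Resultant_Prelim"
begin

definition discriminant :: "'a :: field poly \<Rightarrow> 'a" where
  "discriminant f = (let d = degree f in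
     (-1) ^ (d * (d - 1) div 2) * resultant f (pderiv f) / lead_coeff f)"

definition separable_poly :: "'a :: field poly \<Rightarrow> bool" where
  "separable_poly f \<longleftrightarrow> coprime f (pderiv f)"

definition is_rat_square :: "rat \<Rightarrow> bool" where
  "is_rat_square a \<longleftrightarrow> (\<exists>q::rat. a = q ^ 2)"

end

theory Submission
  imports Defs "Subresultants.Subresultant"
    "HOL-Computational_Algebra.Fundamental_Theorem_Algebra"
begin


definition Rr :: "complex poly \<Rightarrow> complex poly \<Rightarrow> complex" where
  "Rr p q = lead_coeff p ^ degree q * (\<Prod>a\<in>#proots p. poly q a)"

lemma poly_roots_form:
  fixes p :: "complex poly"
  shows "poly p x = lead_coeff p * (\<Prod>a\<in>#proots p. x - a)"
proof -
  have "poly p x = poly (smult (lead_coeff p) (\<Prod>a\<in>#proots p. [:-a, 1:])) x"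
    by (rule arg_cong[where f="\<lambda>p. poly p x"], rule complex_poly_decompose_multiset[symmetric])
  also have "\<dots> = lead_coeff p * (\<Prod>a\<in>#proots p. x - a)"
    unfolding poly_smult poly_prod_mset by simp
  finally show ?thesis .
qed

lemma prod_mset_swap:
  "(\<Prod>a\<in>#A. \<Prod>b\<in>#B. f a b) = (\<Prod>b\<in>#B. \<Prod>a\<in>#A. f a b :: 'c::comm_monoid_mult)"
  by (induction A) (simp_all add: prod_mset.distrib)

lemma prod_poly_roots:
  fixes q :: "complex poly"
  shows "(\<Prod>a\<in>#A. poly q a) = lead_coeff q ^ size A * (\<Prod>a\<in>#A. \<Prod>b\<in>#proots q. a - b)"
proof -
  have "(\<Prod>a\<in>#A. poly q a) = (\<Prod>a\<in>#A. lead_coeff q * (\<Prod>b\<in>#proots q. a - b))"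
    by (simp only: poly_roots_form[of q])
  also have "\<dots> = lead_coeff q ^ size A * (\<Prod>a\<in>#A. \<Prod>b\<in>#proots q. a - b)"
    by (simp add: prod_mset.distrib prod_mset_constant)
  finally show ?thesis .
qed

lemma prod_neg_swap:
  "(\<Prod>b\<in>#B. (a::complex) - b) = (-1) ^ size B * (\<Prod>b\<in>#B. b - a)"
proof -
  have "(\<Prod>b\<in>#B. a - b) = (\<Prod>b\<in>#B. (-1) * (b - a))" by simp
  also have "\<dots> = (-1) ^ size B * (\<Prod>b\<in>#B. b - a)"
    by (simp only: prod_mset.distrib prod_mset_constant)
  finally show ?thesis .
qed

lemma Rr_swap:
  assumes "p \<noteq> 0" "q \<noteq> 0"
  shows "Rr p q = (-1) ^ (degree p * degree q) * Rr q p"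
proof -
  let ?A = "proots p" and ?B = "proots q"
  have sA: "size ?A = degree p" and sB: "size ?B = degree q" by (simp_all add: size_proots_complex)
  have "(\<Prod>a\<in>#?A. \<Prod>b\<in>#?B. a - b) = (\<Prod>a\<in>#?A. (-1) ^ degree q * (\<Prod>b\<in>#?B. b - a))"
    by (simp only: prod_neg_swap sB)
  also have "\<dots> = (-1) ^ (degree p * degree q) * (\<Prod>a\<in>#?A. \<Prod>b\<in>#?B. b - a)"
    by (simp only: prod_mset.distrib prod_mset_constant sA power_mult mult.commute[of "degree p"])
  also have "(\<Prod>a\<in>#?A. \<Prod>b\<in>#?B. b - a) = (\<Prod>b\<in>#?B. \<Prod>a\<in>#?A. b - a)"
    by (rule prod_mset_swap)
  finally have X: "(\<Prod>a\<in>#?A. \<Prod>b\<in>#?B. a - b) = (-1) ^ (degree p * degree q) * (\<Prod>b\<in>#?B. \<Prod>a\<in>#?A. b - a)" .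
  show ?thesis
    unfolding Rr_def prod_poly_roots sA sB X by (simp add: mult_ac)
qed

lemma Rr_euclid:
  assumes G: "G \<noteq> 0" and FGH: "F + B * G = H"
  shows "Rr G F * lead_coeff G ^ degree H = lead_coeff G ^ degree F * Rr G H"
proof -
  have "(\<Prod>b\<in>#proots G. poly F b) = (\<Prod>b\<in>#proots G. poly H b)"
  proof (rule arg_cong[where f=prod_mset], rule image_mset_cong)
    fix b assume "b \<in># proots G"
    then have "poly G b = 0" using G by simp
    then show "poly F b = poly H b" using FGH[symmetric] by simp
  qed
  then show ?thesis unfolding Rr_def by (simp add: mult_ac)
qed

lemma res_euclid:
  fixes F G :: "'a :: field poly"
  assumes F: "F \<noteq> 0" and G: "G \<noteq> 0" and dfg: "degree G \<le> degree F" and dg: "degree G > 0"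
  shows "resultant F G = (-1)^(degree F * degree G) * lead_coeff G ^ (degree F - degree (F mod G))
     * resultant G (F mod G)"
proof -
  define H where "H = F mod G"
  have FGH: "F + (- (F div G)) * G = H" unfolding H_def using div_mult_mod_eq[of F G]
    by (simp add: algebra_simps)
  have choice: "degree G > degree H \<or> H = 0 \<and> F \<noteq> 0 \<and> G \<noteq> 0"
    using degree_mod_less'[OF G, of F] F G unfolding H_def by auto
  show ?thesis
  proof (cases "degree H = 0")
    case True
    have "subresultant (degree H) F G = smult ((-1)^((degree F - degree H) * (degree G - degree H))
       * lead_coeff G ^ (degree F - degree H) * lead_coeff H ^ (degree G - degree H - 1)) H"
      by (rule BT_lemma_1_13[OF FGH dfg choice]) (use dg in auto)
    then have "[:resultant F G:] = smult ((-1)^(degree F * degree G)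
       * lead_coeff G ^ degree F * lead_coeff H ^ (degree G - 1)) H"
      using True by (simp add: subresultant_resultant)
    from arg_cong[OF this, of "\<lambda>x. coeff x 0"]
    have R: "resultant F G = (-1)^(degree F * degree G)
       * lead_coeff G ^ degree F * lead_coeff H ^ (degree G - 1) * coeff H 0" by simp
    from True obtain h where h: "H = [:h:]" by (metis degree_eq_zeroE)
    have "resultant G H = h ^ degree G" using h by simp
    moreover have "h ^ (degree G - 1) * h = h ^ degree G" using dg
      by (metis Suc_diff_1 power_Suc2)
    ultimately show ?thesis using R h True unfolding H_def[symmetric] by (simp add: mult_ac)
  next
    case False
    have "subresultant 0 F G = smult ((-1)^((degree F - 0) * (degree G - 0))
       * lead_coeff G ^ (degree F - degree H)) (subresultant 0 G H)"
      by (rule BT_lemma_1_12[OF FGH dfg choice]) (use False in auto)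
    from arg_cong[OF this, of "\<lambda>x. coeff x 0"]
    show ?thesis unfolding H_def[symmetric] by (simp add: subresultant_resultant)
  qed
qed

lemma res_Rr_aux:
  "\<forall>F G. degree G = n \<longrightarrow> F \<noteq> 0 \<longrightarrow> G \<noteq> 0 \<longrightarrow> degree G \<le> degree F \<longrightarrow> resultant F G = Rr F G"
proof (induction n rule: less_induct)
  case (less n)
  show ?case
  proof (intro allI impI)
    fix F G :: "complex poly"
    assume dG: "degree G = n" and F: "F \<noteq> 0" and G: "G \<noteq> 0" and dfg: "degree G \<le> degree F"
    show "resultant F G = Rr F G"
    proof (cases "degree G = 0")
      case True
      then obtain c where c: "G = [:c:]" by (metis degree_eq_zeroE)
      then show ?thesis by (simp add: Rr_def prod_mset_constant size_proots_complex)
    next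
      case False
      define H where "H = F mod G"
      have FGH: "F + (- (F div G)) * G = H" unfolding H_def using div_mult_mod_eq[of F G]
        by (simp add: algebra_simps)
      have eqR: "resultant F G = (-1)^(degree F * degree G) * lead_coeff G ^ (degree F - degree H) * resultant G H"
        using res_euclid[OF F G dfg] False unfolding H_def by simp
      have dH: "H = 0 \<or> degree H < degree G" using degree_mod_less'[OF G, of F] unfolding H_def by auto
      then have dHF: "degree H \<le> degree F" using dfg by auto
      have lG: "lead_coeff G \<noteq> 0" using G by simp
      have "Rr G F * lead_coeff G ^ degree H = lead_coeff G ^ (degree F - degree H) * Rr G H * lead_coeff G ^ degree H"
        using Rr_euclid[OF G FGH] dHF by (simp add: power_add[symmetric] mult_ac)
      then have "Rr G F = lead_coeff G ^ (degree F - degree H) * Rr G H" using lG by simp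
      then have eqRr: "Rr F G = (-1)^(degree F * degree G) * lead_coeff G ^ (degree F - degree H) * Rr G H"
        using Rr_swap[OF F G] by simp
      have "resultant G H = Rr G H"
      proof (cases "H = 0")
        case True
        have "proots G \<noteq> {#}" using False size_proots_complex[of G] by auto
        then have "size (proots G) > 0" by (simp add: nonempty_has_size)
        then have "Rr G H = 0" using True by (simp add: Rr_def prod_mset_constant)
        moreover have "resultant G H = 0" using True False by simp
        ultimately show ?thesis by simp
      next
        case HF: False
        then have "degree H < degree G" using dH by auto
        then show ?thesis using less.IH[of "degree H"] dG G HF by auto
      qed
      then show ?thesis using eqR eqRr by simp
    qed
  qed
qed

lemma resultant_Rr:
  fixes p q :: "complex poly"
  assumes "p \<noteq> 0" "q \<noteq> 0"
  shows "resultant p q = Rr p q"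
proof (cases "degree q \<le> degree p")
  case True then show ?thesis using res_Rr_aux assms by blast
next
  case False
  then have "resultant q p = Rr q p" using res_Rr_aux assms by auto
  then show ?thesis using resultant_swap[of p q] Rr_swap[OF assms] by (simp add: mult.commute)
qed



definition TT :: "'a::field \<Rightarrow> nat \<Rightarrow> 'a poly \<Rightarrow> 'a poly" where
  "TT u m g = (\<Sum>k\<le>m. smult (coeff g k) (monom 1 (m - k) * [:u, 0, 1:] ^ k))"

lemma poly_eq_nz:
  fixes p q :: "'a::field_char_0 poly"
  assumes "\<And>x. x \<noteq> 0 \<Longrightarrow> poly p x = poly q x"
  shows "p = q"
proof (rule ccontr)
  assume "p \<noteq> q"
  then have "p - q \<noteq> 0" by simp
  then have fin: "finite {x. poly (p - q) x = 0}" by (rule poly_roots_finite)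
  have "UNIV - {0} \<subseteq> {x. poly (p - q) x = 0}" using assms by auto
  then have "finite (UNIV - {0::'a})" using fin finite_subset by blast
  then have "finite (UNIV :: 'a set)" by simp
  then show False using infinite_UNIV_char_0 by blast
qed

lemma poly_sum_le:
  fixes g :: "'a::comm_semiring_1 poly"
  assumes "degree g \<le> m"
  shows "(\<Sum>k\<le>m. coeff g k * y ^ k) = poly g y"
proof -
  have "(\<Sum>k\<le>m. coeff g k * y ^ k) = (\<Sum>k\<le>degree g. coeff g k * y ^ k)"
    by (rule sum.mono_neutral_right) (use assms in \<open>auto simp: coeff_eq_0\<close>)
  then show ?thesis using poly_altdef[of g y] by simp
qed

lemma poly_TT:
  fixes x :: "'a::field"
  assumes "degree g \<le> m" "x \<noteq> 0"
  shows "poly (TT u m g) x = x ^ m * poly g (x + u / x)"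
proof -
  have "poly (TT u m g) x = (\<Sum>k\<le>m. coeff g k * (x ^ (m - k) * (u + x * x) ^ k))"
    by (simp add: TT_def poly_sum poly_monom)
  also have "\<dots> = (\<Sum>k\<le>m. x ^ m * (coeff g k * (x + u / x) ^ k))"
  proof (rule sum.cong[OF refl])
    fix k assume "k \<in> {..m}"
    then have km: "k \<le> m" by simp
    have "u + x * x = x * (x + u / x)" using assms(2) by (simp add: field_simps)
    then have "x ^ (m - k) * (u + x * x) ^ k = x ^ (m - k) * x ^ k * (x + u / x) ^ k"
      by (simp add: power_mult_distrib)
    also have "x ^ (m - k) * x ^ k = x ^ m" using km by (simp add: power_add[symmetric])
    finally show "coeff g k * (x ^ (m - k) * (u + x * x) ^ k) = x ^ m * (coeff g k * (x + u / x) ^ k)"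
      by simp
  qed
  also have "\<dots> = x ^ m * poly g (x + u / x)"
    by (simp add: sum_distrib_left[symmetric] poly_sum_le[OF assms(1)])
  finally show ?thesis .
qed

interpretation ratc: map_poly_inj_idom_hom "of_rat :: rat \<Rightarrow> complex" ..

lemma map_TT: "map_poly (of_rat :: rat \<Rightarrow> complex) (TT u m g) = TT (of_rat u) m (map_poly of_rat g)"
  unfolding TT_def by (simp add: hom_distribs of_rat_hom.map_poly_hom_monom)

lemma TT_construct:
  fixes u :: "'a::field_char_0"
  assumes u: "u * u = 1"
  shows "\<forall>f. degree f \<le> 2 * m \<longrightarrow> (\<forall>x. x \<noteq> 0 \<longrightarrow> poly f x = u ^ m * x ^ (2 * m) * poly f (u / x))
           \<longrightarrow> (\<exists>g. degree g \<le> m \<and> f = TT u m g)"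
proof (induction m)
  case 0
  show ?case
  proof (intro allI impI)
    fix f :: "'a poly" assume "degree f \<le> 2 * 0"
    then obtain c where c: "f = [:c:]" by (metis degree_eq_zeroE le_zero_eq mult_0_right)
    show "\<exists>g. degree g \<le> 0 \<and> f = TT u 0 g"
      by (rule exI[of _ f]) (simp add: TT_def c)
  qed
next
  case (Suc m)
  show ?case
  proof (intro allI impI)
    fix f :: "'a poly"
    assume df: "degree f \<le> 2 * Suc m"
      and sym: "\<forall>x. x \<noteq> 0 \<longrightarrow> poly f x = u ^ Suc m * x ^ (2 * Suc m) * poly f (u / x)"
    define c where "c = coeff f (2 * Suc m)"
    define Q where "Q = [:u, 0, 1:] ^ Suc m"
    define f1 where "f1 = f - smult c Q"
    have d1: "degree [:u, 0, 1:] = 2" by simp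
    have "degree ([:u, 0, 1:] ^ Suc m) = Suc m * degree [:u, 0, 1:]"
      using degree_power_eq[of "[:u, 0, 1:]" "Suc m"] by simp
    then have dQ: "degree Q = 2 * Suc m" unfolding Q_def d1 by (simp del: power_Suc)
    have "lead_coeff ([:u, 0, 1:] ^ Suc m) = lead_coeff [:u, 0, 1:] ^ Suc m"
      by (rule lead_coeff_power)
    then have lQ: "coeff Q (2 * Suc m) = 1" using dQ unfolding Q_def by (simp del: power_Suc)
    have df1: "degree f1 \<le> 2 * m + 1"
    proof (rule degree_le)
      show "\<forall>i>2 * m + 1. coeff f1 i = 0"
      proof (intro allI impI)
        fix i assume "2 * m + 1 < i"
        then have "i = 2 * Suc m \<or> i > 2 * Suc m" by auto
        then show "coeff f1 i = 0"
        proof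
          assume "i = 2 * Suc m" then show ?thesis using lQ by (simp add: f1_def c_def)
        next
          assume i: "i > 2 * Suc m"
          then show ?thesis unfolding f1_def using df dQ by (simp add: coeff_eq_0)
        qed
      qed
    qed
    have symQ: "poly Q x = u ^ Suc m * x ^ (2 * Suc m) * poly Q (u / x)" if x: "x \<noteq> 0" for x
    proof -
      have e: "u * x\<^sup>2 * (u + (u / x) * (u / x)) = u + x * x"
      proof -
        have "u * x\<^sup>2 * (u + (u / x) * (u / x)) = (u * u) * x\<^sup>2 + (u * u) * u" using x
          by (simp add: field_simps power2_eq_square)
        then show ?thesis using u by (simp add: power2_eq_square)
      qed
      have pQ: "poly Q y = (u + y * y) ^ Suc m" for y unfolding Q_def by (simp del: power_Suc)
      have "u ^ Suc m * x ^ (2 * Suc m) * poly Q (u / x) = (u * x\<^sup>2 * (u + (u / x) * (u / x))) ^ Suc m"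
        unfolding pQ by (simp only: power_mult power_mult_distrib)
      then have "u ^ Suc m * x ^ (2 * Suc m) * poly Q (u / x) = (u + x * x) ^ Suc m" by (simp only: e)
      then show ?thesis by (metis pQ)
    qed
    have sym1: "poly f1 x = u ^ Suc m * x ^ (2 * Suc m) * poly f1 (u / x)" if x: "x \<noteq> 0" for x
      using sym x symQ[OF x] unfolding f1_def by (simp add: algebra_simps)
    define d where "d = degree f1"
    define r where "r = reflect_poly (f1 \<circ>\<^sub>p [:0, u:])"
    have u0: "u \<noteq> 0" using u by auto
    have dr: "degree (f1 \<circ>\<^sub>p [:0, u:]) = d" unfolding d_def using u0 by (simp add: degree_pcompose)
    define f2 where "f2 = smult (u ^ Suc m) (monom 1 (2 * m + 1 - d) * r)"
    have f12: "f1 = [:0, 1:] * f2"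
    proof (rule poly_eq_nz)
      fix x :: 'a assume x: "x \<noteq> 0"
      have pr: "poly r x = x ^ d * poly f1 (u / x)"
        unfolding r_def using x dr by (simp add: poly_reflect_poly_nz poly_pcompose divide_inverse mult.commute)
      have "poly ([:0, 1:] * f2) x = u ^ Suc m * (x * x ^ (2 * m + 1 - d) * x ^ d) * poly f1 (u / x)"
        unfolding f2_def using pr by (simp add: poly_monom mult_ac)
      also have "x * x ^ (2 * m + 1 - d) * x ^ d = x ^ (2 * Suc m)"
        using df1 unfolding d_def by (simp add: power_add[symmetric] power_Suc[symmetric] del: power_Suc)
      finally show "poly f1 x = poly ([:0, 1:] * f2) x" using sym1[OF x] by metis
    qed
    have df2: "degree f2 \<le> 2 * m"
    proof (cases "f2 = 0")
      case False
      then have "degree f1 = degree f2 + 1" unfolding f12 by (simp add: degree_mult_eq)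
      then show ?thesis using df1 by simp
    qed simp
    have sym2: "\<forall>x. x \<noteq> 0 \<longrightarrow> poly f2 x = u ^ m * x ^ (2 * m) * poly f2 (u / x)"
    proof (intro allI impI)
      fix x :: 'a assume x: "x \<noteq> 0"
      have "x * poly f2 x = u ^ Suc m * x ^ (2 * Suc m) * ((u / x) * poly f2 (u / x))"
        using sym1[OF x] unfolding f12 by simp
      also have "\<dots> = x * ((u * u) * (u ^ m * x ^ (2 * m) * poly f2 (u / x)))"
        using x by (simp add: field_simps power_add power_mult)
      finally show "poly f2 x = u ^ m * x ^ (2 * m) * poly f2 (u / x)" using x u by simp
    qed
    obtain g2 where dg2: "degree g2 \<le> m" and g2: "f2 = TT u m g2"
      using Suc.IH df2 sym2 by blast
    define g where "g = g2 + monom c (Suc m)"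
    have dg: "degree g \<le> Suc m" unfolding g_def using dg2
      by (meson degree_add_le degree_monom_le le_Suc_eq order_trans)
    have "f = TT u (Suc m) g"
    proof (rule poly_eq_nz)
      fix x :: 'a assume x: "x \<noteq> 0"
      have "f = [:0, 1:] * TT u m g2 + smult c Q" using f12 g2 unfolding f1_def by (metis diff_add_cancel)
      then have p1: "poly f x = x * (x ^ m * poly g2 (x + u / x)) + c * (u + x * x) ^ Suc m"
        using poly_TT[OF dg2 x] by (simp add: Q_def del: power_Suc)
      have e0: "u + x * x = x * (x + u / x)" using x by (simp add: field_simps)
      have e: "(u + x * x) ^ Suc m = x ^ Suc m * (x + u / x) ^ Suc m"
        unfolding e0 by (rule power_mult_distrib)
      have "poly f x = x ^ Suc m * (poly g2 (x + u / x) + c * (x + u / x) ^ Suc m)"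
        unfolding p1 e by (simp add: algebra_simps)
      also have "\<dots> = poly (TT u (Suc m) g) x"
        using poly_TT[OF dg x] by (simp add: g_def poly_monom)
      finally show "poly f x = poly (TT u (Suc m) g) x" .
    qed
    then show "\<exists>g. degree g \<le> Suc m \<and> f = TT u (Suc m) g" using dg by blast
  qed
qed



lemma quad_ident:
  fixes u a :: complex
  assumes u: "u * u = 1" and a: "a \<noteq> 0"
  shows "(1 - u / a\<^sup>2) * (1 - u / (u / a)\<^sup>2) = u * (4 * u - (a + u / a)\<^sup>2)"
proof -
  have u0: "u \<noteq> 0" using u by auto
  have "(1 - u / a\<^sup>2) * (1 - u / (u / a)\<^sup>2) = 2 - u * a\<^sup>2 - u / a\<^sup>2"
  proof -
    have "u / (u / a)\<^sup>2 = a\<^sup>2 / u" using u0 a by (simp add: power2_eq_square field_simps)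
    also have "\<dots> = u * a\<^sup>2" using u u0 by (simp add: field_simps)
    finally have "u / (u / a)\<^sup>2 = u * a\<^sup>2" .
    then show ?thesis using u a by (simp add: field_simps power2_eq_square)
  qed
  also have "\<dots> = u * (4 * u - (a + u / a)\<^sup>2)"
    using u a u0 by (simp add: field_simps power2_eq_square)
  finally show ?thesis .
qed

lemma proots_lin1: "proots (pCons (- x) 1) = {#x :: 'a :: idom#}"
  using proots_linear_factor[of "- x"] by (simp add: pCons_one)

lemma prod_mset_sum_pairs:
  "(\<Prod>x\<in>#(\<Sum>b\<in>#B. {#p b, q b#}). h x) = (\<Prod>b\<in>#B. h (p b) * h (q b))"
  by (induction B) (auto simp: mult_ac)

lemma monic2_prod:
  fixes h :: "'b \<Rightarrow> 'a::idom poly"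
  assumes "\<And>b. b \<in># B \<Longrightarrow> degree (h b) = 2 \<and> lead_coeff (h b) = 1"
  shows "degree (\<Prod>b\<in>#B. h b) = 2 * size B \<and> lead_coeff (\<Prod>b\<in>#B. h b) = 1"
  using assms
proof (induction B)
  case empty then show ?case by simp
next
  case (add x B)
  have hx0: "degree (h x) = 2 \<and> lead_coeff (h x) = 1" by (rule add.prems) simp
  then have hx: "degree (h x) = 2" "lead_coeff (h x) = 1" by blast+
  have IH0: "degree (\<Prod>b\<in>#B. h b) = 2 * size B \<and> lead_coeff (\<Prod>b\<in>#B. h b) = 1"
    by (rule add.IH) (rule add.prems, simp)
  then have IH: "degree (\<Prod>b\<in>#B. h b) = 2 * size B" "lead_coeff (\<Prod>b\<in>#B. h b) = 1" by blast+
  have nz1: "h x \<noteq> 0"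
  proof
    assume A: "h x = 0" show False using hx(2) by (simp only: A) simp
  qed
  have nz2: "(\<Prod>b\<in>#B. h b) \<noteq> 0"
  proof
    assume A: "(\<Prod>b\<in>#B. h b) = 0" show False using IH(2) by (simp only: A) simp
  qed
  note nz = nz1 nz2
  have d: "degree (h x * (\<Prod>b\<in>#B. h b)) = degree (h x) + degree (\<Prod>b\<in>#B. h b)"
    by (rule degree_mult_eq[OF nz1 nz2])
  have l: "lead_coeff (h x * (\<Prod>b\<in>#B. h b)) = lead_coeff (h x) * lead_coeff (\<Prod>b\<in>#B. h b)"
    by (rule lead_coeff_mult)
  have eq: "(\<Prod>b\<in>#add_mset x B. h b) = h x * (\<Prod>b\<in>#B. h b)" by simp
  have l': "lead_coeff (h x * (\<Prod>b\<in>#B. h b)) = 1" using l[unfolded hx(2) IH(2)] by simp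
  have d': "degree (h x * (\<Prod>b\<in>#B. h b)) = 2 * size (add_mset x B)" using d hx(1) IH(1) by simp
  show ?case unfolding eq using l' d' by blast
qed

lemma complex_core:
  fixes F G :: "complex poly" and u :: complex
  assumes u: "u * u = 1" and FT: "F = TT u n G" and dG: "degree G \<le> n"
    and dF: "degree F = 2 * n" and n: "n \<ge> 1"
  shows "degree G = n \<and> lead_coeff F = lead_coeff G \<and>
    (\<forall>s. s * s = u \<longrightarrow> (-1) ^ n * resultant F (pderiv F) / lead_coeff F
        = poly G (2 * s) * poly G (- 2 * s) * (resultant G (pderiv G) / lead_coeff G)\<^sup>2)"
proof -
  have u0: "u \<noteq> 0" using u by auto
  have pF: "poly F x = x ^ n * poly G (x + u / x)" if "x \<noteq> 0" for x
    using poly_TT[OF dG that] FT by simp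
  have G0: "G \<noteq> 0"
  proof
    assume "G = 0"
    then have "F = 0" using FT by (simp add: TT_def)
    then show False using dF n by simp
  qed
  define c where "c = lead_coeff G"
  have c0: "c \<noteq> 0" using G0 by (simp add: c_def)
  define B where "B = proots G"
  define d where "d = degree G"
  have sB: "size B = d" by (simp add: B_def d_def size_proots_complex)
  have pG: "poly G y = c * (\<Prod>b\<in>#B. y - b)" for y
    unfolding c_def B_def by (rule poly_roots_form)
  define a where "a = (\<lambda>b::complex. (b + csqrt (b\<^sup>2 - 4 * u)) / 2)"
  have aq: "a b * a b - b * a b + u = 0" for b
  proof -
    define r where "r = csqrt (b\<^sup>2 - 4 * u)"
    have rr: "r * r = b * b - 4 * u" unfolding r_def using power2_csqrt[of "b\<^sup>2 - 4 * u"]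
      by (simp add: power2_eq_square)
    have "a b * a b - b * a b + u = (r * r - (b * b - 4 * u)) / 4"
      unfolding a_def r_def[symmetric] by (simp add: field_simps)
    then show ?thesis using rr by simp
  qed
  have a0: "a b \<noteq> 0" for b using aq[of b] u0 by auto
  have ab: "a b + u / a b = b" for b
  proof -
    have "a b * (a b + u / a b) = a b * b" using aq[of b] a0[of b]
      by (simp add: field_simps)
    then show ?thesis using a0[of b] by simp
  qed
  have ab2: "u / a b + u / (u / a b) = b" for b
  proof -
    have "u / (u / a b) = a b" using u0 a0[of b] by simp
    then show ?thesis using ab[of b] by (metis add.commute)
  qed
  define h where "h = (\<lambda>b. [:- a b, 1:] * [:- (u / a b), 1:])"
  have ph: "poly (h b) x = x * (x + u / x - b)" if "x \<noteq> 0" for b x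
  proof -
    have "poly (h b) x = (x - a b) * (x - u / a b)" unfolding h_def poly_mult by simp
    also have "\<dots> = x * x - x * (a b + u / a b) + a b * (u / a b)" using a0[of b] by (simp add: field_simps)
    also have "a b * (u / a b) = u" using a0[of b] by simp
    also have "x * x - x * (a b + u / a b) + u = x * (x + u / x - (a b + u / a b))"
      using that by (simp add: algebra_simps)
    finally show ?thesis unfolding ab .
  qed
  define Q where "Q = (\<Prod>b\<in>#B. h b)"
  have dQ: "degree Q = 2 * d \<and> lead_coeff Q = 1" unfolding Q_def sB[symmetric]
    by (rule monic2_prod) (simp add: h_def degree_mult_eq lead_coeff_mult)
  have FQ: "F = smult c (monom 1 (n - d) * Q)"
  proof (rule poly_eq_nz)
    fix x :: complex assume x: "x \<noteq> 0"
    have "poly Q x = (\<Prod>b\<in>#B. x * (x + u / x - b))" unfolding Q_def poly_prod_mset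
      using ph[OF x] by simp
    also have "\<dots> = x ^ d * (\<Prod>b\<in>#B. (x + u / x - b))"
      by (simp add: prod_mset.distrib prod_mset_constant sB)
    finally have "poly (smult c (monom 1 (n - d) * Q)) x = c * (x ^ (n - d) * x ^ d) * (\<Prod>b\<in>#B. (x + u / x - b))"
      by (simp add: poly_monom mult_ac)
    also have "x ^ (n - d) * x ^ d = x ^ n" using dG unfolding d_def by (simp add: power_add[symmetric])
    also have "c * x ^ n * (\<Prod>b\<in>#B. (x + u / x - b)) = x ^ n * poly G (x + u / x)"
      by (simp add: pG mult_ac)
    finally show "poly F x = poly (smult c (monom 1 (n - d) * Q)) x" using pF[OF x] by simp
  qed
  have Q0: "Q \<noteq> 0" using dQ by auto
  have "degree F = (n - d) + 2 * d" using FQ dQ c0 Q0 by (simp add: degree_mult_eq degree_monom_eq)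
  then have dn: "d = n" using dF dG unfolding d_def by simp
  have FQ': "F = smult c Q" using FQ dn by simp
  have lQ: "lead_coeff Q = 1" using dQ by blast
  have lF: "lead_coeff F = c" unfolding FQ' lead_coeff_smult lQ by simp
  have open_nz: "open (UNIV - {0::complex})" by (intro open_Diff open_UNIV closed_singleton)
  have dF': "poly (pderiv F) x = x ^ n * poly (pderiv G) (x + u / x) * (1 - u / x\<^sup>2)"
    if x: "x \<noteq> 0" and r: "poly G (x + u / x) = 0" for x
  proof -
    have d1: "((\<lambda>z. z + u / z) has_field_derivative (1 - u / x\<^sup>2)) (at x)"
      using x by (auto intro!: derivative_eq_intros simp: power2_eq_square field_simps)
    have d2: "((\<lambda>z. poly G (z + u / z)) has_field_derivative poly (pderiv G) (x + u / x) * (1 - u / x\<^sup>2)) (at x)"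
      by (rule DERIV_chain'[OF d1 poly_DERIV])
    have d3: "((\<lambda>z. z ^ n * poly G (z + u / z)) has_field_derivative
        x ^ n * (poly (pderiv G) (x + u / x) * (1 - u / x\<^sup>2))) (at x)"
      by (rule DERIV_cong[OF DERIV_mult'[OF DERIV_power[OF DERIV_ident] d2]]) (simp add: r)
    have d4: "(poly F has_field_derivative x ^ n * (poly (pderiv G) (x + u / x) * (1 - u / x\<^sup>2))) (at x)"
      by (rule has_field_derivative_transform_within_open[OF d3 open_nz]) (use x pF in auto)
    show ?thesis using DERIV_unique[OF poly_DERIV[of F x] d4] by (simp add: mult_ac)
  qed
  have hnz: "0 \<notin># image_mset h B" by (auto simp: h_def)
  have ph2: "proots (h b) = {#a b, u / a b#}" for b
    unfolding h_def using proots_mult[of "[:- a b, 1:]" "[:- (u / a b), 1:]"] by (simp add: proots_lin1)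
  have rootsF: "proots F = (\<Sum>b\<in>#B. {#a b, u / a b#})"
  proof -
    have "proots Q = (\<Sum>p\<in>#image_mset h B. proots p)"
      unfolding Q_def using proots_prod_mset[OF hnz] by simp
    also have "\<dots> = (\<Sum>b\<in>#B. {#a b, u / a b#})" by (simp add: image_mset.compositionality o_def ph2)
    finally show ?thesis using FQ' c0 by simp
  qed
  define Pg where "Pg = (\<Prod>b\<in>#B. poly (pderiv G) b)"
  define P where "P = (\<Prod>b\<in>#B. 4 * u - b\<^sup>2)"
  have prodF: "(\<Prod>x\<in>#proots F. poly (pderiv F) x) = (\<Prod>b\<in>#B. u ^ Suc n * (poly (pderiv G) b * poly (pderiv G) b) * (4 * u - b\<^sup>2))"
    unfolding rootsF prod_mset_sum_pairs
  proof (rule arg_cong[where f=prod_mset], rule image_mset_cong)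
    fix b assume b: "b \<in># B"
    then have Gb: "poly G b = 0" using G0 by (simp add: B_def)
    have 1: "poly (pderiv F) (a b) = a b ^ n * poly (pderiv G) b * (1 - u / (a b)\<^sup>2)"
      using dF'[of "a b"] a0[of b] ab[of b] Gb by simp
    have 2: "poly (pderiv F) (u / a b) = (u / a b) ^ n * poly (pderiv G) b * (1 - u / (u / a b)\<^sup>2)"
      using dF'[of "u / a b"] a0[of b] u0 ab2[of b] Gb by simp
    have aa: "a b * (u / a b) = u" using a0[of b] by simp
    have "poly (pderiv F) (a b) * poly (pderiv F) (u / a b)
       = (a b * (u / a b)) ^ n * (poly (pderiv G) b * poly (pderiv G) b) * ((1 - u / (a b)\<^sup>2) * (1 - u / (u / a b)\<^sup>2))"
      unfolding 1 2 power_mult_distrib by (simp only: mult_ac)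
    also have "\<dots> = u ^ n * (poly (pderiv G) b * poly (pderiv G) b) * (u * (4 * u - b\<^sup>2))"
      unfolding aa quad_ident[OF u a0[of b]] ab[of b] ..
    finally show "poly (pderiv F) (a b) * poly (pderiv F) (u / a b) = u ^ Suc n * (poly (pderiv G) b * poly (pderiv G) b) * (4 * u - b\<^sup>2)"
      by (simp add: mult_ac)
  qed
  have ue: "u ^ (Suc n * n) = 1"
  proof -
    define k where "k = Suc n * n div 2"
    have k: "Suc n * n = 2 * k" unfolding k_def by simp
    have "u ^ (2 * k) = (u * u) ^ k" by (simp add: power_mult power2_eq_square)
    then show ?thesis using k u by simp
  qed
  have prodF2: "(\<Prod>x\<in>#proots F. poly (pderiv F) x) = Pg * Pg * P"
  proof -
    have "(\<Prod>b\<in>#B. u ^ Suc n * (poly (pderiv G) b * poly (pderiv G) b) * (4 * u - b\<^sup>2))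
      = (u ^ Suc n) ^ size B * (Pg * Pg) * P" unfolding Pg_def P_def
      by (simp only: prod_mset.distrib prod_mset_constant)
    also have "(u ^ Suc n) ^ size B = 1" unfolding sB dn power_mult[symmetric] by (rule ue)
    finally show ?thesis unfolding prodF by simp
  qed
  have F0: "F \<noteq> 0" using dF n by auto
  have pF0: "pderiv F \<noteq> 0" using dF n by (simp add: pderiv_eq_0_iff)
  have pG0: "pderiv G \<noteq> 0" using dn n unfolding d_def by (simp add: pderiv_eq_0_iff)
  have dpF: "degree (pderiv F) = 2 * n - 1" using dF by (simp add: degree_pderiv)
  have dpG: "degree (pderiv G) = n - 1" using dn unfolding d_def by (simp add: degree_pderiv)
  have RF: "resultant F (pderiv F) = c ^ (2 * n - 1) * (Pg * Pg * P)"
    using resultant_Rr[OF F0 pF0] prodF2 unfolding Rr_def lF dpF by simp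
  have RG: "resultant G (pderiv G) = c ^ (n - 1) * Pg"
    using resultant_Rr[OF G0 pG0] unfolding Rr_def dpG Pg_def B_def c_def by simp
  have GG: "poly G (2 * s) * poly G (- 2 * s) = c * c * (-1) ^ n * P" if s: "s * s = u" for s
  proof -
    have "poly G (2 * s) * poly G (- 2 * s) = c * c * (\<Prod>b\<in>#B. (2 * s - b) * (- 2 * s - b))"
      unfolding pG by (simp add: prod_mset.distrib mult_ac)
    also have "(\<Prod>b\<in>#B. (2 * s - b) * (- 2 * s - b)) = (\<Prod>b\<in>#B. (-1) * (4 * u - b\<^sup>2))"
      by (rule arg_cong[where f=prod_mset], rule image_mset_cong)
         (use s in \<open>simp add: algebra_simps power2_eq_square\<close>)
    also have "\<dots> = (-1) ^ n * P" unfolding P_def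
      by (simp only: prod_mset.distrib prod_mset_constant sB dn)
    finally show ?thesis by (simp add: mult_ac)
  qed
  obtain k where nk: "n = Suc k" using n by (cases n) auto
  have final: "(-1) ^ n * resultant F (pderiv F) / lead_coeff F
        = poly G (2 * s) * poly G (- 2 * s) * (resultant G (pderiv G) / lead_coeff G)\<^sup>2" if s: "s * s = u" for s
  proof -
    have e1: "c ^ (2 * n - 1) = c * (c ^ k * c ^ k)" using nk by (simp add: power_add[symmetric] mult_2)
    show ?thesis unfolding GG[OF s] RF RG lF c_def[symmetric] e1 using c0 nk
      by (simp add: field_simps power2_eq_square)
  qed
  show ?thesis using dn lF final unfolding d_def c_def by blast
qed





lemma res0_common:
  "\<forall>F G :: 'a::field poly. degree G = m \<longrightarrow> F \<noteq> 0 \<longrightarrow> G \<noteq> 0 \<longrightarrow> degree G \<le> degree F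
     \<longrightarrow> degree G > 0 \<longrightarrow> resultant F G = 0 \<longrightarrow> (\<exists>D. degree D > 0 \<and> D dvd F \<and> D dvd G)"
proof (induction m rule: less_induct)
  case (less m)
  show ?case
  proof (intro allI impI)
    fix F G :: "'a poly"
    assume dG: "degree G = m" and F: "F \<noteq> 0" and G: "G \<noteq> 0" and dfg: "degree G \<le> degree F"
      and dg: "degree G > 0" and R: "resultant F G = 0"
    define H where "H = F mod G"
    have lG: "lead_coeff G \<noteq> 0" using G by simp
    have RH: "resultant G H = 0"
      using res_euclid[OF F G dfg dg] R lG unfolding H_def by simp
    have FGH: "F = F div G * G + H" unfolding H_def by simp
    show "\<exists>D. degree D > 0 \<and> D dvd F \<and> D dvd G"
    proof (cases "H = 0")
      case True
      then have "G dvd F" unfolding H_def by (simp add: dvd_eq_mod_eq_0)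
      then show ?thesis using dg by (intro exI[of _ G]) auto
    next
      case H0: False
      show ?thesis
      proof (cases "degree H = 0")
        case True
        then obtain h where h: "H = [:h:]" by (metis degree_eq_zeroE)
        then have "h \<noteq> 0" using H0 by simp
        then have "resultant G H \<noteq> 0" using h by simp
        then show ?thesis using RH by simp
      next
        case False
        have "degree H < degree G" using degree_mod_less'[OF G, of F] H0 unfolding H_def by simp
        then obtain D where D: "degree D > 0" "D dvd G" "D dvd H"
          using less.IH[of "degree H"] dG G H0 RH False by (metis less_imp_le neq0_conv)
        have "D dvd F" using D FGH by (metis dvd_add dvd_mult)
        then show ?thesis using D by blast
      qed
    qed
  qed
qed

lemma sep_res_nz:
  fixes f :: "'a::field_char_0 poly"
  assumes "coprime f (pderiv f)" "degree f \<ge> 2"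
  shows "resultant f (pderiv f) \<noteq> 0"
proof
  assume R: "resultant f (pderiv f) = 0"
  have f0: "f \<noteq> 0" using assms(2) by auto
  have dp: "degree (pderiv f) = degree f - 1" by (rule degree_pderiv)
  have p0: "pderiv f \<noteq> 0" using assms(2) by (simp add: pderiv_eq_0_iff)
  have dle: "degree (pderiv f) \<le> degree f" and dpos: "degree (pderiv f) > 0" using dp assms(2) by auto
  have "\<exists>D. degree D > 0 \<and> D dvd f \<and> D dvd pderiv f"
    using res0_common[of "degree (pderiv f)", rule_format, OF refl f0 p0 dle dpos R] .
  then obtain D where D: "degree D > 0" "D dvd f" "D dvd pderiv f" by blast
  have "is_unit D" using assms(1) D(2,3) by (rule coprime_common_divisor)
  then have "degree D = 0" by (simp add: is_unit_iff_degree)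
  then show False using D(1) by simp
qed

lemma sign_exp: "n \<ge> 1 \<Longrightarrow> ((-1) :: 'a :: comm_ring_1) ^ (2 * n * (2 * n - 1) div 2) = (-1) ^ n"
proof -
  assume n: "n \<ge> 1"
  have e: "2 * n * (2 * n - 1) div 2 = n * (2 * n - 1)" by simp
  have "odd (2 * n - 1)" using n by simp
  then have "even (n * (2 * n - 1)) = even n" by simp
  then show ?thesis unfolding e by (rule minus_1_even_eqI)
qed

lemma sign_exp2: "n \<ge> 1 \<Longrightarrow> ((-1) :: 'a :: comm_ring_1) ^ (n * (2 * n - Suc 0)) = (-1) ^ n"
  using sign_exp[of n] by simp

lemma rat_core:
  fixes f :: "rat poly" and u :: rat
  assumes u: "u * u = 1" and deg: "degree f = 2 * n" and n: "n \<ge> 1"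
    and sym: "\<forall>x. x \<noteq> 0 \<longrightarrow> poly f x = u ^ n * x ^ (2 * n) * poly f (u / x)"
  shows "\<exists>g. degree g = n \<and> f = TT u n g \<and>
    (\<forall>s::complex. s * s = of_rat u \<longrightarrow> of_rat (discriminant f) =
       poly (map_poly of_rat g) (2 * s) * poly (map_poly of_rat g) (- 2 * s)
       * (of_rat (resultant g (pderiv g) / lead_coeff g))\<^sup>2)"
proof -
  obtain g where dg: "degree g \<le> n" and fg: "f = TT u n g"
  proof -
    have d: "degree f \<le> 2 * n" using deg by simp
    have "\<exists>g. degree g \<le> n \<and> f = TT u n g"
      using TT_construct[OF u, of n, THEN spec, of f, THEN mp, OF d, THEN mp, OF sym] .
    then show ?thesis using that by blast
  qed
  define F where "F = map_poly (of_rat :: rat \<Rightarrow> complex) f"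
  define G where "G = map_poly (of_rat :: rat \<Rightarrow> complex) g"
  have FT: "F = TT (of_rat u) n G" unfolding F_def G_def fg by (rule map_TT)
  have uc: "of_rat u * of_rat u = (1::complex)" using u by (metis of_rat_1 of_rat_mult)
  have dG: "degree G \<le> n" using dg unfolding G_def by simp
  have dF: "degree F = 2 * n" using deg unfolding F_def by simp
  note cc = complex_core[OF uc FT dG dF n]
  have dgn: "degree g = n" using cc unfolding G_def by simp
  have A: "of_rat (discriminant f) = (-1) ^ n * resultant F (pderiv F) / lead_coeff F"
    unfolding discriminant_def Let_def F_def
    by (simp add: deg sign_exp2[OF n] of_rat_hom.map_poly_pderiv[symmetric] of_rat_hom.resultant_hom of_rat_divide of_rat_mult of_rat_power)
  have Bf: "of_rat (resultant g (pderiv g) / lead_coeff g) = resultant G (pderiv G) / lead_coeff G"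
    unfolding G_def
    by (simp add: of_rat_hom.map_poly_pderiv[symmetric] of_rat_hom.resultant_hom of_rat_divide)
  have C: "\<forall>s. s * s = of_rat u \<longrightarrow> (-1) ^ n * resultant F (pderiv F) / lead_coeff F
        = poly G (2 * s) * poly G (- 2 * s) * (resultant G (pderiv G) / lead_coeff G)\<^sup>2"
    using cc by blast
  have "\<forall>s::complex. s * s = of_rat u \<longrightarrow> of_rat (discriminant f) =
       poly G (2 * s) * poly G (- 2 * s) * (of_rat (resultant g (pderiv g) / lead_coeff g))\<^sup>2"
    unfolding A Bf using C by blast
  then show ?thesis using dgn fg unfolding G_def by blast
qed





lemma sq_transfer:
  fixes D K r :: rat
  assumes "D = K * r\<^sup>2" "r \<noteq> 0"
  shows "is_rat_square D \<longleftrightarrow> is_rat_square K"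
  unfolding is_rat_square_def
proof
  assume "\<exists>q. D = q ^ 2"
  then obtain q where q: "D = q ^ 2" by blast
  have "K = (q / r) ^ 2" using assms q by (simp add: power_divide field_simps)
  then show "\<exists>q. K = q ^ 2" by blast
next
  assume "\<exists>q. K = q ^ 2"
  then obtain q where q: "K = q ^ 2" by blast
  have "D = (q * r) ^ 2" using assms q by (simp add: power_mult_distrib)
  then show "\<exists>q. D = q ^ 2" by blast
qed

lemma poly_map_rat: "poly (map_poly (of_rat :: rat \<Rightarrow> complex) g) (of_rat x) = of_rat (poly g x)"
  by (rule of_rat_hom.poly_map_poly)

theorem lemma2p2:
  fixes f :: "rat poly" and n :: nat
  assumes sep: "separable_poly f"
    and deg: "degree f = 2 * n"
    and npos: "n \<ge> 1"
  shows "((\<forall>x::rat. x \<noteq> 0 \<longrightarrow> poly f x = x ^ (2 * n) * poly f (inverse x)) \<longrightarrow>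
           (is_rat_square (discriminant f) \<longleftrightarrow>
            is_rat_square ((-1) ^ n * poly f 1 * poly f (-1))))
       \<and> ((\<forall>x::rat. x \<noteq> 0 \<longrightarrow>
             poly f x = (-1) ^ (2 * n * (2 * n - 1) div 2) * x ^ (2 * n) * poly f (- inverse x)) \<longrightarrow>
           (is_rat_square (discriminant f) \<longleftrightarrow>
            (\<exists>q::rat. poly (map_poly of_rat f) \<i> * poly (map_poly of_rat f) (- \<i>) = of_rat (q ^ 2))))"
proof -
  have f0: "f \<noteq> 0" using deg npos by auto
  have D0: "discriminant f \<noteq> 0"
  proof -
    have R: "resultant f (pderiv f) \<noteq> 0" using sep unfolding separable_poly_def
      by (rule sep_res_nz) (use deg npos in simp)
    have "lead_coeff f \<noteq> 0" using f0 by simp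
    then show ?thesis unfolding discriminant_def Let_def using R by simp
  qed
  show ?thesis
  proof (intro conjI impI)
    assume H: "\<forall>x::rat. x \<noteq> 0 \<longrightarrow> poly f x = x ^ (2 * n) * poly f (inverse x)"
    have sym: "\<forall>x. x \<noteq> 0 \<longrightarrow> poly f x = 1 ^ n * x ^ (2 * n) * poly f (1 / x)"
    proof (intro allI impI)
      fix x :: rat assume x: "x \<noteq> 0"
      show "poly f x = 1 ^ n * x ^ (2 * n) * poly f (1 / x)"
        using H[rule_format, OF x] by (simp add: inverse_eq_divide)
    qed
    obtain g where dg: "degree g = n" and fg: "f = TT 1 n g"
      and Dg: "\<forall>s::complex. s * s = of_rat 1 \<longrightarrow> of_rat (discriminant f) =
       poly (map_poly of_rat g) (2 * s) * poly (map_poly of_rat g) (- 2 * s)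
       * (of_rat (resultant g (pderiv g) / lead_coeff g))\<^sup>2"
      using rat_core[OF _ deg npos sym] by auto
    define r where "r = resultant g (pderiv g) / lead_coeff g"
    have "of_rat (discriminant f) = poly (map_poly of_rat g) (of_rat 2) * poly (map_poly of_rat g) (of_rat (-2))
       * (of_rat r :: complex)\<^sup>2"
      using Dg[rule_format, of 1] unfolding r_def by simp
    then have "(of_rat (discriminant f) :: complex) = of_rat (poly g 2 * poly g (-2) * r\<^sup>2)"
      unfolding poly_map_rat by (simp add: of_rat_mult of_rat_power)
    then have DE: "discriminant f = poly g 2 * poly g (-2) * r\<^sup>2" by (simp only: of_rat_eq_iff)
    have f1: "poly f 1 = poly g 2" using poly_TT[of g n "1::rat" 1] dg fg by simp
    have fm1: "poly f (-1) = (-1) ^ n * poly g (-2)" using poly_TT[of g n "-1::rat" 1] dg fg by simp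
    have K: "(-1) ^ n * poly f 1 * poly f (-1) = poly g 2 * poly g (-2)"
      unfolding f1 fm1 by (simp add: power_mult_distrib[symmetric] mult_ac)
    have r0: "r \<noteq> 0" using D0 DE by auto
    show "is_rat_square (discriminant f) \<longleftrightarrow> is_rat_square ((-1) ^ n * poly f 1 * poly f (-1))"
      by (rule sq_transfer[OF _ r0]) (simp add: DE K)
  next
    assume H: "\<forall>x::rat. x \<noteq> 0 \<longrightarrow>
             poly f x = (-1) ^ (2 * n * (2 * n - 1) div 2) * x ^ (2 * n) * poly f (- inverse x)"
    have sym: "\<forall>x. x \<noteq> 0 \<longrightarrow> poly f x = (-1) ^ n * x ^ (2 * n) * poly f ((-1) / x)"
    proof (intro allI impI)
      fix x :: rat assume x: "x \<noteq> 0"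
      show "poly f x = (-1) ^ n * x ^ (2 * n) * poly f ((-1) / x)"
        using H[rule_format, OF x] by (simp add: inverse_eq_divide sign_exp2[OF npos])
    qed
    have u: "(-1::rat) * (-1) = 1" by simp
    obtain g where dg: "degree g = n" and fg: "f = TT (-1) n g"
      and Dg: "\<forall>s::complex. s * s = of_rat (-1) \<longrightarrow> of_rat (discriminant f) =
       poly (map_poly of_rat g) (2 * s) * poly (map_poly of_rat g) (- 2 * s)
       * (of_rat (resultant g (pderiv g) / lead_coeff g))\<^sup>2"
      using rat_core[OF u deg npos sym] by blast
    define r where "r = resultant g (pderiv g) / lead_coeff g"
    define G where "G = map_poly (of_rat :: rat \<Rightarrow> complex) g"
    define F where "F = map_poly (of_rat :: rat \<Rightarrow> complex) f"
    have FT: "F = TT (-1) n G" unfolding F_def G_def fg map_TT by simp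
    have dG: "degree G \<le> n" unfolding G_def using dg by simp
    have E: "of_rat (discriminant f) = poly G (2 * \<i>) * poly G (- 2 * \<i>) * (of_rat r)\<^sup>2"
      using Dg[rule_format, of "\<i>"] unfolding r_def G_def by simp
    have Fi: "poly F \<i> = \<i> ^ n * poly G (2 * \<i>)"
      using poly_TT[OF dG, of "\<i>" "-1"] FT by simp
    have Fmi: "poly F (- \<i>) = (- \<i>) ^ n * poly G (- 2 * \<i>)"
      using poly_TT[OF dG, of "- \<i>" "-1"] FT by simp
    have Z: "poly F \<i> * poly F (- \<i>) = poly G (2 * \<i>) * poly G (- 2 * \<i>)"
    proof -
      have "poly F \<i> * poly F (- \<i>) = (\<i> * (- \<i>)) ^ n * (poly G (2 * \<i>) * poly G (- 2 * \<i>))"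
        unfolding Fi Fmi power_mult_distrib by (simp only: mult_ac)
      then show ?thesis by simp
    qed
    have r0: "r \<noteq> 0" using D0 E by auto
    have r0c: "(of_rat r :: complex) \<noteq> 0" using r0 by simp
    show "is_rat_square (discriminant f) \<longleftrightarrow>
            (\<exists>q::rat. poly (map_poly of_rat f) \<i> * poly (map_poly of_rat f) (- \<i>) = of_rat (q ^ 2))"
      unfolding is_rat_square_def F_def[symmetric] Z
    proof
      assume "\<exists>q. discriminant f = q ^ 2"
      then obtain q where q: "discriminant f = q ^ 2" by blast
      have "poly G (2 * \<i>) * poly G (- 2 * \<i>) = of_rat (discriminant f) / (of_rat r)\<^sup>2"
        using E r0c by (simp add: field_simps)
      also have "\<dots> = of_rat ((q / r) ^ 2)" unfolding q by (simp add: of_rat_divide of_rat_power power_divide)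
      finally show "\<exists>q. poly G (2 * \<i>) * poly G (- 2 * \<i>) = of_rat (q ^ 2)" by blast
    next
      assume "\<exists>q. poly G (2 * \<i>) * poly G (- 2 * \<i>) = of_rat (q ^ 2)"
      then obtain q where q: "poly G (2 * \<i>) * poly G (- 2 * \<i>) = of_rat (q ^ 2)" by blast
      have "(of_rat (discriminant f) :: complex) = of_rat ((q * r) ^ 2)"
        unfolding E q by (simp add: of_rat_mult of_rat_power power_mult_distrib)
      then have "discriminant f = (q * r) ^ 2" by (simp only: of_rat_eq_iff)
      then show "\<exists>q. discriminant f = q ^ 2" by blast
    qed
  qed
qed


end
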